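(* Let $A$ be a real $n\times n$ matrix of the form $A=CDE$, where $C,E$ are invertible real $n\times n$ matrices and $D$ is a diagonal matrix with some zero entries on its main diagonal. Let $D'$ be the diagonal matrix obtained from $D$ by replacing each zero diagonal entry with $1$ (and keeping the nonzero entries), and let $B=(C^{-1})^{\top}D'E$. Then $B$ is invertible and the pair $(A,B)$ is monotone, i.e. $\langle Ax-Ay,\,Bx-By\rangle\ge0$ for all $x,y\in\mathbb{R}^n$.
   Context: For maps $F_1,F_2:\mathbb{R}^n\to\mathbb{R}^n$, the pair $(F_1,F_2)$ is called monotone if $\langle F_1(x)-F_1(y),F_2(x)-F_2(y)\rangle\ge 0$ for all $x,y$. *)

theory Defs
  imports "HOL-Analysis.Analysis"
begin

definition monotone_pair :: "('a::real_inner \<Rightarrow> 'a) \<Rightarrow> ('a \<Rightarrow> 'a) \<Rightarrow> bool" where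
  "monotone_pair F1 F2 \<longleftrightarrow> (\<forall>x y. (F1 x - F1 y) \<bullet> (F2 x - F2 y) \<ge> 0)"

definition is_diagonal :: "real^'n^'n \<Rightarrow> bool" where
  "is_diagonal D \<longleftrightarrow> (\<forall>i j. i \<noteq> j \<longrightarrow> D $ i $ j = 0)"

definition fill_zero_diag :: "real^'n^'n \<Rightarrow> real^'n^'n" where
  "fill_zero_diag D = (\<chi> i j. if i = j \<and> D $ i $ j = 0 then 1 else D $ i $ j)"

end

theory Submission
  imports Defs
begin

lemma diag_mulv:
  fixes D :: "real^'n^'n"
  assumes "is_diagonal D"
  shows "(D *v w) $ i = D $ i $ i * w $ i"
proof -
  have "(D *v w) $ i = (\<Sum>j\<in>UNIV. D $ i $ j * w $ j)" by (simp add: matrix_vector_mult_def)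
  also have "\<dots> = D $ i $ i * w $ i"
    by (subst sum.mono_neutral_right[of UNIV "{i}"]) (use assms in \<open>auto simp: is_diagonal_def\<close>)
  finally show ?thesis .
qed

lemma fill_diag: "is_diagonal D \<Longrightarrow> is_diagonal (fill_zero_diag D)"
  by (auto simp: is_diagonal_def fill_zero_diag_def)

lemma fill_inv:
  fixes D :: "real^'n^'n"
  assumes "is_diagonal D"
  shows "invertible (fill_zero_diag D)"
proof -
  let ?F = "fill_zero_diag D"
  have nz: "?F $ i $ i \<noteq> 0" for i by (auto simp: fill_zero_diag_def)
  define G :: "real^'n^'n" where "G = (\<chi> i j. if i = j then 1 / ?F $ i $ i else 0)"
  have dG: "is_diagonal G" by (auto simp: G_def is_diagonal_def)
  have "?F ** G = mat 1"
  proof (rule matrix_eq[THEN iffD2], intro allI)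
    fix x :: "real^'n"
    show "(?F ** G) *v x = mat 1 *v x"
      by (simp add: matrix_vector_mul_assoc[symmetric] vec_eq_iff diag_mulv[OF fill_diag[OF assms]]
          diag_mulv[OF dG] nz) (simp add: G_def nz)
  qed
  moreover have "G ** ?F = mat 1"
  proof (rule matrix_eq[THEN iffD2], intro allI)
    fix x :: "real^'n"
    show "(G ** ?F) *v x = mat 1 *v x"
      by (simp add: matrix_vector_mul_assoc[symmetric] vec_eq_iff diag_mulv[OF fill_diag[OF assms]]
          diag_mulv[OF dG] nz) (simp add: G_def nz)
  qed
  ultimately show ?thesis unfolding invertible_def by blast
qed

lemma minv:
  fixes C :: "real^'n^'n"
  assumes "invertible C"
  shows "C ** matrix_inv C = mat 1 \<and> matrix_inv C ** C = mat 1"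
  using assms unfolding invertible_def matrix_inv_def by (rule someI_ex)

lemma minv_inv:
  fixes C :: "real^'n^'n"
  assumes "invertible C"
  shows "invertible (matrix_inv C)"
  using minv[OF assms] unfolding invertible_def by blast

theorem theorem3p2:
  fixes A C D E :: "real^'n^'n"
  assumes "invertible C" and "invertible E"
    and "is_diagonal D" and "\<exists>i. D $ i $ i = 0"
    and "A = C ** D ** E"
  defines "B \<equiv> transpose (matrix_inv C) ** fill_zero_diag D ** E"
  shows "invertible B \<and> monotone_pair (\<lambda>x. A *v x) (\<lambda>x. B *v x)"
proof
  have "invertible (matrix_inv C)" using assms(1) by (rule minv_inv)
  hence "invertible (transpose (matrix_inv C))" by (rule transpose_invertible)
  then show "invertible B" unfolding B_def
    using fill_inv[OF assms(3)] assms(2) by (simp add: invertible_mult)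
next
  let ?F = "fill_zero_diag D"
  have key: "0 \<le> (A *v z) \<bullet> (B *v z)" for z
  proof -
    define w where "w = E *v z"
    have "(A *v z) \<bullet> (B *v z) = (C *v (D *v w)) \<bullet> (transpose (matrix_inv C) *v (?F *v w))"
      by (simp add: assms(5) B_def w_def matrix_vector_mul_assoc[symmetric])
    also have "\<dots> = (?F *v w) \<bullet> (matrix_inv C *v (C *v (D *v w)))"
      by (metis dot_lmul_matrix inner_commute transpose_matrix_vector)
    also have "matrix_inv C *v (C *v (D *v w)) = D *v w"
      by (simp add: matrix_vector_mul_assoc matrix_mul_assoc minv[OF assms(1)])
    also have "(?F *v w) \<bullet> (D *v w) = (D *v w) \<bullet> (?F *v w)" by (rule inner_commute)
    also have "(D *v w) \<bullet> (?F *v w) = (\<Sum>i\<in>UNIV. (D $ i $ i * w $ i) * (?F $ i $ i * w $ i))"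
      by (simp add: inner_vec_def diag_mulv[OF assms(3)] diag_mulv[OF fill_diag[OF assms(3)]])
    also have "\<dots> \<ge> 0"
      by (rule sum_nonneg) (auto simp: fill_zero_diag_def)
    finally show ?thesis .
  qed
  show "monotone_pair (\<lambda>x. A *v x) (\<lambda>x. B *v x)"
    unfolding monotone_pair_def
    using key by (simp add: matrix_vector_mult_diff_distrib[symmetric])
qed

end
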